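(* Let $\mathcal{N}=(N,M_0)$ be a two-level PT-net system with transitions partitioned into low-level $L$ and high-level $H$. Then $\mathcal{N}$ has the property SBNDC if and only if $P(h,l)$ holds for every $h\in H$ and every $l\in L$.
   Context: A PT-net is $N=(P,T,F)$ with $P,T$ finite disjoint and $F:(P\times T)\cup(T\times P)\to\mathbb{N}$; markings $M:P\to\mathbb{N}$; $t$ enabled at $M$ ($M[t\rangle$) iff $M(p)\ge F(p,t)$ for all $p$, firing gives $M'(p)=M(p)+F(t,p)-F(p,t)$ ($M[t\rangle M'$); extended to sequences. Reachable markings are those $M$ with $M_0[s\rangle M$. $N\setminus H$ deletes the transitions of $H$. Two net systems all of whose transitions are observable are weakly bisimilar if there is a relation $R$ between their reachable markings containing the initial pair such that for $(M,M')\in R$ each step $M[t\rangle M''$ is matched by $M'[t\rangle M'''$ with $(M'',M''')\in R$, and symmetrically. SBNDC: for every reachable marking $M_1$ of $\mathcal{N}$ and every $h\in H$, $M_1[h\rangle M_2$ implies that $(N\setminus H,M_1)$ and $(N\setminus H,M_2)$ are weakly bisimilar. For $h\in H$, $l\in L$, $P(h,l)$ holds iff for all words $s\in L^*$ and $w\in(L\cup H)^*$: if $M_0[w\rangle M_1$, $M_1[h\rangle M_2$, $M_1[s\rangle M_3$ and $M_2[s\rangle M_4$, then $M_3[l\rangle$ iff $M_4[l\rangle$. *)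

theory Defs
  imports Main
begin

text \<open>A PT-net N = (P, T, F). The flow function F on (P x T) u (T x P) is split into
  pre t p = F(p,t) and post t p = F(t,p). Places and transitions live in different
  types, hence are disjoint.\<close>

record ('p, 't) ptnet =
  places :: "'p set"
  trans  :: "'t set"
  pre    :: "'t \<Rightarrow> 'p \<Rightarrow> nat"
  post   :: "'t \<Rightarrow> 'p \<Rightarrow> nat"

definition is_ptnet :: "('p, 't) ptnet \<Rightarrow> bool" where
  "is_ptnet N \<longleftrightarrow> finite (places N) \<and> finite (trans N)"

definition markings :: "('p, 't) ptnet \<Rightarrow> ('p \<Rightarrow> nat) set" where
  "markings N = {M. \<forall>p. p \<notin> places N \<longrightarrow> M p = 0}"

definition enabled :: "('p, 't) ptnet \<Rightarrow> ('p \<Rightarrow> nat) \<Rightarrow> 't \<Rightarrow> bool" where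
  "enabled N M t \<longleftrightarrow> t \<in> trans N \<and> (\<forall>p\<in>places N. pre N t p \<le> M p)"

definition fire :: "('p, 't) ptnet \<Rightarrow> ('p \<Rightarrow> nat) \<Rightarrow> 't \<Rightarrow> ('p \<Rightarrow> nat) \<Rightarrow> bool" where
  "fire N M t M' \<longleftrightarrow> enabled N M t \<and>
     M' = (\<lambda>p. if p \<in> places N then M p + post N t p - pre N t p else 0)"

fun fire_seq :: "('p, 't) ptnet \<Rightarrow> ('p \<Rightarrow> nat) \<Rightarrow> 't list \<Rightarrow> ('p \<Rightarrow> nat) \<Rightarrow> bool" where
  "fire_seq N M [] M' \<longleftrightarrow> M' = M"
| "fire_seq N M (t # s) M' \<longleftrightarrow> (\<exists>M''. fire N M t M'' \<and> fire_seq N M'' s M')"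

definition reachable :: "('p, 't) ptnet \<Rightarrow> ('p \<Rightarrow> nat) \<Rightarrow> ('p \<Rightarrow> nat) \<Rightarrow> bool" where
  "reachable N M0 M \<longleftrightarrow> (\<exists>s. fire_seq N M0 s M)"

definition delete_trans :: "('p, 't) ptnet \<Rightarrow> 't set \<Rightarrow> ('p, 't) ptnet" where
  "delete_trans N H = N\<lparr>trans := trans N - H\<rparr>"

text \<open>Weak bisimilarity of net systems all of whose transitions are observable.\<close>
definition weakly_bisimilar ::
  "('p, 't) ptnet \<Rightarrow> ('p \<Rightarrow> nat) \<Rightarrow> ('q, 't) ptnet \<Rightarrow> ('q \<Rightarrow> nat) \<Rightarrow> bool" where
  "weakly_bisimilar N1 M01 N2 M02 \<longleftrightarrow>
     (\<exists>R. R \<subseteq> {M. reachable N1 M01 M} \<times> {M. reachable N2 M02 M} \<and>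
          (M01, M02) \<in> R \<and>
          (\<forall>(M, M') \<in> R. \<forall>t M''. fire N1 M t M'' \<longrightarrow>
              (\<exists>M'''. fire N2 M' t M''' \<and> (M'', M''') \<in> R)) \<and>
          (\<forall>(M, M') \<in> R. \<forall>t M'''. fire N2 M' t M''' \<longrightarrow>
              (\<exists>M''. fire N1 M t M'' \<and> (M'', M''') \<in> R)))"

definition SBNDC :: "('p, 't) ptnet \<Rightarrow> ('p \<Rightarrow> nat) \<Rightarrow> 't set \<Rightarrow> bool" where
  "SBNDC N M0 H \<longleftrightarrow>
     (\<forall>M1. reachable N M0 M1 \<longrightarrow> (\<forall>h\<in>H. \<forall>M2. fire N M1 h M2 \<longrightarrow>
        weakly_bisimilar (delete_trans N H) M1 (delete_trans N H) M2))"

definition P_prop ::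
  "('p, 't) ptnet \<Rightarrow> ('p \<Rightarrow> nat) \<Rightarrow> 't set \<Rightarrow> 't set \<Rightarrow> 't \<Rightarrow> 't \<Rightarrow> bool" where
  "P_prop N M0 L H h l \<longleftrightarrow>
     (\<forall>s w M1 M2 M3 M4. set s \<subseteq> L \<longrightarrow> set w \<subseteq> L \<union> H \<longrightarrow>
        fire_seq N M0 w M1 \<longrightarrow> fire N M1 h M2 \<longrightarrow>
        fire_seq N M1 s M3 \<longrightarrow> fire_seq N M2 s M4 \<longrightarrow>
        (enabled N M3 l \<longleftrightarrow> enabled N M4 l))"

end

theory Submission
  imports Defs
begin

lemma fire_del: "fire (delete_trans N H) M t M' \<longleftrightarrow> t \<notin> H \<and> fire N M t M'"
  by (auto simp: fire_def enabled_def delete_trans_def)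

lemma fire_seq_del:
  "fire_seq (delete_trans N H) M s M' \<longleftrightarrow> set s \<inter> H = {} \<and> fire_seq N M s M'"
  by (induction s arbitrary: M) (auto simp: fire_del)

lemma fire_seq_trans: "fire_seq N M s M' \<Longrightarrow> set s \<subseteq> trans N"
  by (induction s arbitrary: M) (auto simp: fire_def enabled_def)

lemma fire_det: "fire N M t M' \<Longrightarrow> fire N M t M'' \<Longrightarrow> M' = M''"
  by (simp add: fire_def)

lemma enabled_fire: "enabled N M t \<Longrightarrow> \<exists>M'. fire N M t M'"
  by (simp add: fire_def)

lemma fire_seq_app:
  "fire_seq N M (s @ [t]) M' \<longleftrightarrow> (\<exists>M''. fire_seq N M s M'' \<and> fire N M'' t M')"
  by (induction s arbitrary: M) auto

theorem proposition6:
  fixes N :: "('p, 't) ptnet" and M0 :: "'p \<Rightarrow> nat" and L H :: "'t set"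
  assumes "is_ptnet N"
    and "M0 \<in> markings N"
    and "L \<inter> H = {}"
    and "L \<union> H = trans N"
  shows "SBNDC N M0 H \<longleftrightarrow> (\<forall>h\<in>H. \<forall>l\<in>L. P_prop N M0 L H h l)"
proof
  assume S: "SBNDC N M0 H"
  show "\<forall>h\<in>H. \<forall>l\<in>L. P_prop N M0 L H h l"
    unfolding P_prop_def
  proof (intro ballI allI impI)
    fix h l s w M1 M2 M3 M4
    assume hH: "h \<in> H" and lL: "l \<in> L" and sL: "set s \<subseteq> L" and "set w \<subseteq> L \<union> H"
      and w: "fire_seq N M0 w M1" and h: "fire N M1 h M2"
      and s3: "fire_seq N M1 s M3" and s4: "fire_seq N M2 s M4"
    have "reachable N M0 M1" using w by (auto simp: reachable_def)
    with S hH h have "weakly_bisimilar (delete_trans N H) M1 (delete_trans N H) M2"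
      by (auto simp: SBNDC_def)
    then obtain R where R0: "(M1, M2) \<in> R"
      and F: "\<forall>(M, M') \<in> R. \<forall>t M''. fire (delete_trans N H) M t M'' \<longrightarrow>
              (\<exists>M'''. fire (delete_trans N H) M' t M''' \<and> (M'', M''') \<in> R)"
      and B: "\<forall>(M, M') \<in> R. \<forall>t M'''. fire (delete_trans N H) M' t M''' \<longrightarrow>
              (\<exists>M''. fire (delete_trans N H) M t M'' \<and> (M'', M''') \<in> R)"
      unfolding weakly_bisimilar_def by blast
    have gen: "\<And>A B'. (A, B') \<in> R \<Longrightarrow> fire_seq N A s M3 \<Longrightarrow> fire_seq N B' s M4 \<Longrightarrow> (M3, M4) \<in> R"
      using sL
    proof (induction s arbitrary: M3 M4 rule: rev_induct)
      case Nil then show ?case by simp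
    next
      case (snoc t s)
      from snoc.prems obtain A' B'' where a: "fire_seq N A s A'" "fire N A' t M3"
        and b: "fire_seq N B' s B''" "fire N B'' t M4" by (auto simp: fire_seq_app)
      have tL: "t \<notin> H" using snoc.prems(4) assms(3) by auto
      have "(A', B'') \<in> R" using snoc.IH[OF snoc.prems(1) a(1) b(1)] snoc.prems(4) by auto
      with F a(2) tL obtain X where "fire (delete_trans N H) B'' t X" "(M3, X) \<in> R"
        by (fastforce simp: fire_del)
      moreover then have "X = M4" using b(2) fire_det by (metis fire_del)
      ultimately show ?case by simp
    qed
    have R34: "(M3, M4) \<in> R" using gen[OF R0 s3 s4] .
    have lnH: "l \<notin> H" using lL assms(3) by auto
    show "enabled N M3 l \<longleftrightarrow> enabled N M4 l"
    proof
      assume "enabled N M3 l"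
      then obtain X where "fire N M3 l X" using enabled_fire[of N M3 l] by blast
      with F R34 lnH obtain Y where "fire (delete_trans N H) M4 l Y"
        by (fastforce simp: fire_del)
      then show "enabled N M4 l" unfolding fire_del by (simp add: fire_def)
    next
      assume "enabled N M4 l"
      then obtain X where "fire N M4 l X" using enabled_fire[of N M4 l] by blast
      with B R34 lnH obtain Y where "fire (delete_trans N H) M3 l Y"
        by (fastforce simp: fire_del)
      then show "enabled N M3 l" unfolding fire_del by (simp add: fire_def)
    qed
  qed
next
  assume P: "\<forall>h\<in>H. \<forall>l\<in>L. P_prop N M0 L H h l"
  show "SBNDC N M0 H"
    unfolding SBNDC_def
  proof (intro allI impI ballI)
    fix M1 h M2
    assume r: "reachable N M0 M1" and hH: "h \<in> H" and h: "fire N M1 h M2"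
    obtain w where w: "fire_seq N M0 w M1" using r by (auto simp: reachable_def)
    have wLH: "set w \<subseteq> L \<union> H" using fire_seq_trans[OF w] assms(4) by simp
    define R where "R = {(M3, M4). \<exists>s. set s \<subseteq> L \<and> fire_seq N M1 s M3 \<and> fire_seq N M2 s M4}"
    have LH: "\<And>s. set s \<subseteq> L \<Longrightarrow> set s \<inter> H = {}" using assms(3) by auto
    have en: "enabled N M3 t \<longleftrightarrow> enabled N M4 t"
      if "t \<in> L" "set s \<subseteq> L" "fire_seq N M1 s M3" "fire_seq N M2 s M4" for s t M3 M4
      using P hH that w wLH h unfolding P_prop_def by blast
    show "weakly_bisimilar (delete_trans N H) M1 (delete_trans N H) M2"
      unfolding weakly_bisimilar_def
    proof (intro exI conjI)
      show "R \<subseteq> {M. reachable (delete_trans N H) M1 M} \<times> {M. reachable (delete_trans N H) M2 M}"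
        unfolding R_def reachable_def using LH by (auto simp: fire_seq_del)
      show "(M1, M2) \<in> R" unfolding R_def by (intro CollectI case_prodI exI[of _ "[]"]) auto
      show "\<forall>(M, M') \<in> R. \<forall>t M''. fire (delete_trans N H) M t M'' \<longrightarrow>
              (\<exists>M'''. fire (delete_trans N H) M' t M''' \<and> (M'', M''') \<in> R)"
      proof (clarify)
        fix M3 M4 t M''
        assume "(M3, M4) \<in> R" and f: "fire (delete_trans N H) M3 t M''"
        then obtain s where s: "set s \<subseteq> L" "fire_seq N M1 s M3" "fire_seq N M2 s M4"
          unfolding R_def by auto
        from f have tH: "t \<notin> H" and f': "fire N M3 t M''" by (auto simp: fire_del)
        have tL: "t \<in> L" using f' tH assms(4) by (auto simp: fire_def enabled_def)
        have "enabled N M4 t" using en[OF tL s] f' by (simp add: fire_def)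
        then obtain Y where Y: "fire N M4 t Y" using enabled_fire[of N M4 t] by blast
        have "(M'', Y) \<in> R" unfolding R_def using s tL f' Y
          by (auto intro!: exI[of _ "s @ [t]"] simp: fire_seq_app)
        then show "\<exists>M'''. fire (delete_trans N H) M4 t M''' \<and> (M'', M''') \<in> R"
          using Y tH by (auto simp: fire_del)
      qed
      show "\<forall>(M, M') \<in> R. \<forall>t M'''. fire (delete_trans N H) M' t M''' \<longrightarrow>
              (\<exists>M''. fire (delete_trans N H) M t M'' \<and> (M'', M''') \<in> R)"
      proof (clarify)
        fix M3 M4 t M''
        assume "(M3, M4) \<in> R" and f: "fire (delete_trans N H) M4 t M''"
        then obtain s where s: "set s \<subseteq> L" "fire_seq N M1 s M3" "fire_seq N M2 s M4"
          unfolding R_def by auto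
        from f have tH: "t \<notin> H" and f': "fire N M4 t M''" by (auto simp: fire_del)
        have tL: "t \<in> L" using f' tH assms(4) by (auto simp: fire_def enabled_def)
        have "enabled N M3 t" using en[OF tL s] f' by (simp add: fire_def)
        then obtain Y where Y: "fire N M3 t Y" using enabled_fire[of N M3 t] by blast
        have "(Y, M'') \<in> R" unfolding R_def using s tL f' Y
          by (auto intro!: exI[of _ "s @ [t]"] simp: fire_seq_app)
        then show "\<exists>M'''. fire (delete_trans N H) M3 t M''' \<and> (M''', M'') \<in> R"
          using Y tH by (auto simp: fire_del)
      qed
    qed
  qed
qed

end
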